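(* Let $t_n=n(n+1)/2$. There exists a rational parametric solution of the system \[ t_{x}+t_{y}=t_{p},\quad t_{y}+t_{z}=t_{q},\quad t_{z}+t_{x}=t_{r} \] depending on three parameters; that is, there exist rational functions $x,y,z,p,q,r\in\mathbb{Q}(u,v,w)$ in three independent indeterminates $u,v,w$ which satisfy the system identically in $\mathbb{Q}(u,v,w)$ and such that the field $\mathbb{Q}(x,y,z,p,q,r)$ has transcendence degree $3$ over $\mathbb{Q}$.
   Context: Here $t_n=n(n+1)/2$ is extended to arguments in any field of characteristic $0$ by the same formula. *)

theory Defs
  imports "HOL-Computational_Algebra.Polynomial" "HOL-Computational_Algebra.Fraction_Field"
begin

type_synonym ratfun3 = "rat poly poly poly fract"

definition var_u :: ratfun3 where "var_u = Fract [:[:[:0, 1:]:]:] 1"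
definition var_v :: ratfun3 where "var_v = Fract [:[:0, 1:]:] 1"
definition var_w :: ratfun3 where "var_w = Fract [:0, 1:] 1"

definition ratK :: "rat \<Rightarrow> ratfun3" where "ratK c = Fract [:[:[:c:]:]:] 1"

definition tri :: "'a::field \<Rightarrow> 'a" where "tri n = n * (n + 1) / 2"

definition is_subfield :: "ratfun3 set \<Rightarrow> bool" where
  "is_subfield F \<longleftrightarrow> 0 \<in> F \<and> 1 \<in> F \<and> (\<forall>a\<in>F. \<forall>b\<in>F. a + b \<in> F \<and> a - b \<in> F \<and> a * b \<in> F)
     \<and> (\<forall>a\<in>F. inverse a \<in> F)"

definition gen_subfield :: "ratfun3 set \<Rightarrow> ratfun3 set" where
  "gen_subfield S = \<Inter>{F. is_subfield F \<and> S \<subseteq> F}"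

text \<open>A polynomial is a finitely supported
  coefficient function on exponent vectors (lists of length k).\<close>
definition alg_indep :: "ratfun3 list \<Rightarrow> bool" where
  "alg_indep as \<longleftrightarrow>
     (\<forall>(c :: nat list \<Rightarrow> rat) E. finite E \<and> (\<forall>e\<in>E. length e = length as) \<and>
        (\<Sum>e\<in>E. ratK (c e) * (\<Prod>i<length as. (as ! i) ^ (e ! i))) = 0
        \<longrightarrow> (\<forall>e\<in>E. c e = 0))"

definition trdeg_eq :: "ratfun3 set \<Rightarrow> nat \<Rightarrow> bool" where
  "trdeg_eq F n \<longleftrightarrow>
     (\<exists>as. length as = n \<and> set as \<subseteq> F \<and> alg_indep as) \<and>
     (\<forall>as. set as \<subseteq> F \<and> alg_indep as \<longrightarrow> length as \<le> n)"

end

theory Submission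
  imports Defs
begin


definition evp :: "rat poly poly poly \<Rightarrow> rat" where
  "evp p = poly (poly (poly p [:[:5:]:]) [:3:]) 2"

lemma evp_simps [simp]: "evp (p + q) = evp p + evp q" "evp (p * q) = evp p * evp q"
  "evp (- p) = - evp p" "evp (p - q) = evp p - evp q" "evp 1 = 1" "evp 0 = 0"
  by (simp_all add: evp_def)

definition evr :: "ratfun3 \<Rightarrow> rat \<Rightarrow> bool" where
  "evr e q \<longleftrightarrow> (\<exists>a b. e = Fract a b \<and> evp b \<noteq> 0 \<and> q = evp a / evp b)"

lemma evp_nz: "evp b \<noteq> 0 \<Longrightarrow> b \<noteq> 0" by auto

lemma evr_add: "evr e q \<Longrightarrow> evr f r \<Longrightarrow> evr (e + f) (q + r)"
  unfolding evr_def
  apply (elim exE conjE)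
  subgoal for a c b d
    apply (rule exI[of _ "a * d + c * b"], rule exI[of _ "b * d"])
    using evp_nz[of b] evp_nz[of d] by (simp add: field_simps)
  done

lemma evr_mult: "evr e q \<Longrightarrow> evr f r \<Longrightarrow> evr (e * f) (q * r)"
  unfolding evr_def
  apply (elim exE conjE)
  subgoal for a c b d
    apply (rule exI[of _ "a * c"], rule exI[of _ "b * d"])
    by (simp add: field_simps)
  done

lemma evr_minus: "evr e q \<Longrightarrow> evr (- e) (- q)"
  unfolding evr_def
  apply (elim exE conjE)
  subgoal for a b
    apply (rule exI[of _ "- a"], rule exI[of _ "b"])
    by (simp add: field_simps)
  done

lemma evr_diff: "evr e q \<Longrightarrow> evr f r \<Longrightarrow> evr (e - f) (q - r)"
  using evr_add[OF _ evr_minus, of e q f r] by simp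

lemma evr_inverse: "evr e q \<Longrightarrow> q \<noteq> 0 \<Longrightarrow> evr (inverse e) (inverse q)"
proof -
  assume "evr e q" "q \<noteq> 0"
  then obtain a b where ab: "e = Fract a b" "evp b \<noteq> 0" "q = evp a / evp b" unfolding evr_def by blast
  with \<open>q \<noteq> 0\<close> have "evp a \<noteq> 0" by auto
  show ?thesis unfolding evr_def
    by (rule exI[of _ b], rule exI[of _ a]) (use ab \<open>evp a \<noteq> 0\<close> in simp)
qed

lemma evr_divide: "evr e q \<Longrightarrow> evr f r \<Longrightarrow> r \<noteq> 0 \<Longrightarrow> evr (e / f) (q / r)"
  using evr_mult[OF _ evr_inverse] by (simp add: divide_inverse)

lemma evr_one: "evr 1 1"
  unfolding evr_def by (rule exI[of _ 1], rule exI[of _ 1]) (simp add: One_fract_def)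

lemma evr_numeral: "evr (numeral k) (numeral k)"
proof (induction k)
  case One then show ?case using evr_one by simp
next
  case (Bit0 k) then show ?case using evr_add[OF Bit0 Bit0] by (simp add: numeral_Bit0)
next
  case (Bit1 k) then show ?case using evr_add[OF evr_add[OF Bit1 Bit1] evr_one] by (simp add: numeral_Bit1)
qed

lemma evr_u: "evr var_u 2"
  unfolding evr_def var_u_def by (rule exI[of _ "[:[:[:0, 1:]:]:]"], rule exI[of _ 1]) (simp add: evp_def)
lemma evr_v: "evr var_v 3"
  unfolding evr_def var_v_def by (rule exI[of _ "[:[:0, 1:]:]"], rule exI[of _ 1]) (simp add: evp_def)
lemma evr_w: "evr var_w 5"
  unfolding evr_def var_w_def by (rule exI[of _ "[:0, 1:]"], rule exI[of _ 1]) (simp add: evp_def)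

lemma evr_nz: "evr e q \<Longrightarrow> q \<noteq> 0 \<Longrightarrow> e \<noteq> 0"
  unfolding evr_def
  apply (elim exE conjE)
  subgoal for a b
    using evp_nz[of b] by (auto simp: Zero_fract_def eq_fract)
  done

lemmas evr_intros = evr_add evr_diff evr_mult evr_minus evr_divide evr_inverse evr_one evr_numeral evr_u evr_v evr_w

lemma "1 - var_u^2 \<noteq> 0"
  apply (rule evr_nz)
  apply (simp only: power2_eq_square)
  apply (rule evr_diff)
  apply (rule evr_one)
  apply (rule evr_mult)
  apply (rule evr_u)
  apply (rule evr_u)
  apply simp
  done


definition al :: "'a::field \<Rightarrow> 'a" where "al m = 2*m/(1-m^2)"
definition be :: "'a::field \<Rightarrow> 'a" where "be m = -(1+m^2)/(1-m^2)"
definition Z0 :: "'a::field \<Rightarrow> 'a \<Rightarrow> 'a" where "Z0 m n = al n / m + be n"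
definition sD :: "'a::field \<Rightarrow> 'a \<Rightarrow> 'a \<Rightarrow> 'a" where "sD m n k = al m ^ 2 + al n ^ 2 - k ^ 2"
definition sN :: "'a::field \<Rightarrow> 'a \<Rightarrow> 'a \<Rightarrow> 'a" where "sN m n k = Z0 m n * k - al m - Z0 m n * al n"
definition sS :: "'a::field \<Rightarrow> 'a \<Rightarrow> 'a \<Rightarrow> 'a" where "sS m n k = 2 * sN m n k / sD m n k"
definition XX :: "'a::field \<Rightarrow> 'a \<Rightarrow> 'a \<Rightarrow> 'a" where "XX m n k = 1/m + sS m n k"
definition YY :: "'a::field \<Rightarrow> 'a \<Rightarrow> 'a \<Rightarrow> 'a" where "YY m n k = 1 + al m * sS m n k"
definition ZZ :: "'a::field \<Rightarrow> 'a \<Rightarrow> 'a \<Rightarrow> 'a" where "ZZ m n k = Z0 m n + al n * sS m n k"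
definition PP :: "'a::field \<Rightarrow> 'a \<Rightarrow> 'a \<Rightarrow> 'a" where "PP m n k = XX m n k + m * (YY m n k - 1)"
definition RR :: "'a::field \<Rightarrow> 'a \<Rightarrow> 'a \<Rightarrow> 'a" where "RR m n k = XX m n k + n * (ZZ m n k - 1)"
definition QQ :: "'a::field \<Rightarrow> 'a \<Rightarrow> 'a \<Rightarrow> 'a" where "QQ m n k = Z0 m n + k * sS m n k"

context
  fixes m n k :: "'a::field_char_0"
  assumes hm: "m \<noteq> 0" and hm2: "1 - m^2 \<noteq> 0" and hn2: "1 - n^2 \<noteq> 0" and hD: "sD m n k \<noteq> 0"
begin

lemma al_d: "al x * (1 - x^2) = 2 * x" if "1 - x^2 \<noteq> 0" for x :: 'a
  unfolding al_def using that by simp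
lemma be_d: "be x * (1 - x^2) = -(1 + x^2)" if "1 - x^2 \<noteq> 0" for x :: 'a
  unfolding be_def using that by simp

lemma YY_lin: "YY m n k = al m * XX m n k + be m"
proof -
  have i: "m * (1/m) = 1" using hm by simp
  have e: "(1 - m^2) * (1/(1 - m^2)) = 1" using hm2 by simp
  show ?thesis unfolding YY_def XX_def using al_d[OF hm2] be_d[OF hm2] i e by algebra
qed

lemma ZZ_lin: "ZZ m n k = al n * XX m n k + be n"
  unfolding ZZ_def XX_def Z0_def by (simp add: algebra_simps add_divide_distrib)

lemma eq1: "XX m n k ^ 2 + YY m n k ^ 2 = PP m n k ^ 2 + 1"
  unfolding PP_def using YY_lin al_d[OF hm2] be_d[OF hm2] by algebra

lemma eq3: "ZZ m n k ^ 2 + XX m n k ^ 2 = RR m n k ^ 2 + 1"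
  unfolding RR_def using ZZ_lin al_d[OF hn2] be_d[OF hn2] by algebra

lemma eq2: "YY m n k ^ 2 + ZZ m n k ^ 2 = QQ m n k ^ 2 + 1"
proof -
  have s: "sS m n k * sD m n k = 2 * sN m n k" unfolding sS_def using hD by simp
  show ?thesis unfolding YY_def ZZ_def QQ_def
    using s unfolding sD_def sN_def by algebra
qed

end


lemma evr_power: "evr e q \<Longrightarrow> evr (e ^ n) (q ^ n)"
  by (induction n) (simp_all add: evr_one evr_mult)

lemmas evr_intros2 = evr_add evr_diff evr_mult evr_minus evr_divide evr_inverse evr_power evr_one evr_numeral evr_u evr_v evr_w

lemma nz_u: "var_u \<noteq> 0"
  by (rule evr_nz[OF evr_u]) simp

lemma nz_u2: "1 - var_u^2 \<noteq> 0"
  by (rule evr_nz, (rule evr_intros2 | simp add: power2_eq_square)+)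

lemma nz_v2: "1 - var_v^2 \<noteq> 0"
  by (rule evr_nz, (rule evr_intros2 | simp add: power2_eq_square)+)

lemma nz_D: "sD var_u var_v var_w \<noteq> 0"
  unfolding sD_def al_def
  by (rule evr_nz, (rule evr_intros2 | simp add: power2_eq_square)+)

lemma nz_S: "sS var_u var_v var_w \<noteq> 0"
  unfolding sS_def sD_def sN_def Z0_def al_def be_def
  by (rule evr_nz, (rule evr_intros2 | simp add: power2_eq_square)+)

lemma nz_Y: "YY var_u var_v var_w - 1 \<noteq> 0"
  unfolding YY_def sS_def sD_def sN_def Z0_def al_def be_def
  by (rule evr_nz, (rule evr_intros2 | simp add: power2_eq_square)+)

lemma nz_Z: "ZZ var_u var_v var_w - 1 \<noteq> 0"
  unfolding ZZ_def sS_def sD_def sN_def Z0_def al_def be_def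
  by (rule evr_nz, (rule evr_intros2 | simp add: power2_eq_square)+)

lemma gen_sub: "is_subfield (gen_subfield S)"
  unfolding is_subfield_def gen_subfield_def by auto

lemma gen_sup: "S \<subseteq> gen_subfield S"
  unfolding gen_subfield_def by auto

context fixes F assumes F: "is_subfield F" begin
lemma sf_one: "1 \<in> F" using F unfolding is_subfield_def by auto
lemma sf_add: "a \<in> F \<Longrightarrow> b \<in> F \<Longrightarrow> a + b \<in> F" using F unfolding is_subfield_def by auto
lemma sf_diff: "a \<in> F \<Longrightarrow> b \<in> F \<Longrightarrow> a - b \<in> F" using F unfolding is_subfield_def by auto
lemma sf_mult: "a \<in> F \<Longrightarrow> b \<in> F \<Longrightarrow> a * b \<in> F" using F unfolding is_subfield_def by auto
lemma sf_inv: "a \<in> F \<Longrightarrow> inverse a \<in> F" using F unfolding is_subfield_def by auto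
lemma sf_div: "a \<in> F \<Longrightarrow> b \<in> F \<Longrightarrow> a / b \<in> F" using sf_mult sf_inv by (simp add: divide_inverse)
lemma sf_minus: "a \<in> F \<Longrightarrow> - a \<in> F" using sf_diff[of 0 a] F unfolding is_subfield_def by auto
lemma sf_power: "a \<in> F \<Longrightarrow> a ^ n \<in> F" by (induction n) (auto intro: sf_one sf_mult)
lemma sf_numeral: "numeral k \<in> F"
proof (induction k)
  case One then show ?case using sf_one by simp
next
  case (Bit0 k) then show ?case using sf_add[OF Bit0 Bit0] by (simp only: numeral_Bit0)
next
  case (Bit1 k) then show ?case using sf_add[OF sf_add[OF Bit1 Bit1] sf_one] by (simp only: numeral_Bit1)
qed
lemmas sf_intros = sf_one sf_add sf_diff sf_mult sf_div sf_minus sf_power sf_numeral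
end

lemma tri_X: "tri ((X - 1) / 2) = (X^2 - 1) / (8::'a::field_char_0)"
  unfolding tri_def by (simp add: field_simps power2_eq_square)

abbreviation "wX \<equiv> XX var_u var_v var_w"
abbreviation "wY \<equiv> YY var_u var_v var_w"
abbreviation "wZ \<equiv> ZZ var_u var_v var_w"
abbreviation "wP \<equiv> PP var_u var_v var_w"
abbreviation "wQ \<equiv> QQ var_u var_v var_w"
abbreviation "wR \<equiv> RR var_u var_v var_w"

lemma sys:
  "tri ((wX - 1)/2) + tri ((wY - 1)/2) = tri ((wP - 1)/2)"
  "tri ((wY - 1)/2) + tri ((wZ - 1)/2) = tri ((wQ - 1)/2)"
  "tri ((wZ - 1)/2) + tri ((wX - 1)/2) = tri ((wR - 1)/2)"
proof -
  note h = nz_u nz_u2 nz_v2 nz_D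
  show "tri ((wX - 1)/2) + tri ((wY - 1)/2) = tri ((wP - 1)/2)"
    unfolding tri_X using eq1[OF h] by (simp add: field_simps)
  show "tri ((wY - 1)/2) + tri ((wZ - 1)/2) = tri ((wQ - 1)/2)"
    unfolding tri_X using eq2[OF h] by (simp add: field_simps)
  show "tri ((wZ - 1)/2) + tri ((wX - 1)/2) = tri ((wR - 1)/2)"
    unfolding tri_X using eq3[OF h] by (simp add: field_simps)
qed

lemma in_gen:
  defines "G \<equiv> gen_subfield {(wX - 1)/2, (wY - 1)/2, (wZ - 1)/2, (wP - 1)/2, (wQ - 1)/2, (wR - 1)/2}"
  shows "var_u \<in> G" "var_v \<in> G" "var_w \<in> G"
proof -
  have sf: "is_subfield G" unfolding G_def by (rule gen_sub)
  have bk: "2 * ((A - 1) / 2) + 1 = A" for A :: ratfun3 by (simp add: diff_divide_distrib)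
  have mem: "(A - 1)/2 \<in> G \<Longrightarrow> A \<in> G" for A
    by (metis bk sf sf_add sf_mult sf_numeral sf_one)
  have sub: "{(wX - 1)/2, (wY - 1)/2, (wZ - 1)/2, (wP - 1)/2, (wQ - 1)/2, (wR - 1)/2} \<subseteq> G"
    unfolding G_def by (rule gen_sup)
  have X: "wX \<in> G" by (rule mem) (use sub in auto)
  have Y: "wY \<in> G" by (rule mem) (use sub in auto)
  have Z: "wZ \<in> G" by (rule mem) (use sub in auto)
  have P: "wP \<in> G" by (rule mem) (use sub in auto)
  have Q: "wQ \<in> G" by (rule mem) (use sub in auto)
  have R: "wR \<in> G" by (rule mem) (use sub in auto)
  have "var_u = (wP - wX) / (wY - 1)" unfolding PP_def using nz_Y by simp
  then show u: "var_u \<in> G" using sf_div[OF sf] sf_diff[OF sf] sf_one[OF sf] P X Y by metis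
  have "var_v = (wR - wX) / (wZ - 1)" unfolding RR_def using nz_Z by simp
  then show v: "var_v \<in> G" using sf_div[OF sf] sf_diff[OF sf] sf_one[OF sf] R X Z by metis
  have S: "sS var_u var_v var_w \<in> G"
    using X u by (metis XX_def add_diff_cancel_left' sf sf_div sf_diff sf_one)
  have Z0: "Z0 var_u var_v \<in> G"
    unfolding Z0_def al_def be_def using u v by (intro sf_intros[OF sf])
  have "var_w = (wQ - Z0 var_u var_v) / sS var_u var_v var_w" unfolding QQ_def using nz_S by simp
  then show "var_w \<in> G" using sf_div[OF sf] sf_diff[OF sf] Q Z0 S by metis
qed


definition bd2 :: "nat \<Rightarrow> 'a::comm_semiring_0 poly poly \<Rightarrow> bool" where
  "bd2 K p \<longleftrightarrow> degree p \<le> K \<and> (\<forall>i. degree (coeff p i) \<le> K)"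

definition bd3 :: "nat \<Rightarrow> 'a::comm_semiring_0 poly poly poly \<Rightarrow> bool" where
  "bd3 K p \<longleftrightarrow> degree p \<le> K \<and> (\<forall>i. bd2 K (coeff p i))"

lemma bd2_mono: "bd2 K p \<Longrightarrow> K \<le> L \<Longrightarrow> bd2 L p"
  unfolding bd2_def by (meson order_trans)

lemma bd3_mono: "bd3 K p \<Longrightarrow> K \<le> L \<Longrightarrow> bd3 L p"
  unfolding bd3_def using bd2_mono by (meson order_trans)

lemma bd2_sum: "finite A \<Longrightarrow> (\<And>x. x \<in> A \<Longrightarrow> bd2 K (f x)) \<Longrightarrow> bd2 K (sum f A)"
  unfolding bd2_def by (auto simp: coeff_sum intro!: degree_sum_le)

lemma bd2_mult: "bd2 a p \<Longrightarrow> bd2 b q \<Longrightarrow> bd2 (a + b) (p * q)"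
  unfolding bd2_def
proof (intro conjI allI)
  assume h: "degree p \<le> a \<and> (\<forall>i. degree (coeff p i) \<le> a)" "degree q \<le> b \<and> (\<forall>i. degree (coeff q i) \<le> b)"
  show "degree (p * q) \<le> a + b" using h degree_mult_le[of p q] by linarith
  fix i
  show "degree (coeff (p * q) i) \<le> a + b" unfolding coeff_mult
    apply (rule degree_sum_le, simp)
    subgoal for x using h degree_mult_le[of "coeff p x" "coeff q (i - x)"] by (meson add_mono order_trans)
    done
qed

lemma bd3_mult: "bd3 a p \<Longrightarrow> bd3 b q \<Longrightarrow> bd3 (a + b) (p * q)"
  unfolding bd3_def
proof (intro conjI allI)
  assume h: "degree p \<le> a \<and> (\<forall>i. bd2 a (coeff p i))" "degree q \<le> b \<and> (\<forall>i. bd2 b (coeff q i))"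
  show "degree (p * q) \<le> a + b" using h degree_mult_le[of p q] by linarith
  fix i
  show "bd2 (a + b) (coeff (p * q) i)" unfolding coeff_mult
    by (rule bd2_sum) (use h in \<open>auto intro: bd2_mult\<close>)
qed

lemma bd3_sum: "finite A \<Longrightarrow> (\<And>x. x \<in> A \<Longrightarrow> bd3 K (f x)) \<Longrightarrow> bd3 K (sum f A)"
  unfolding bd3_def by (auto simp: coeff_sum intro!: degree_sum_le bd2_sum)

lemma bd3_one: "bd3 0 (1 :: 'a::comm_semiring_1 poly poly poly)"
  unfolding bd3_def bd2_def by (auto simp: coeff_1)

lemma bd3_const: "bd3 0 [:[:[:c:]:]:]"
  unfolding bd3_def bd2_def by (auto simp: coeff_pCons split: nat.splits)

lemma bd3_power: "bd3 K p \<Longrightarrow> bd3 (n * K) (p ^ n)"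
  by (induction n) (simp_all add: bd3_one bd3_mult)

lemma bd3_prod: "finite A \<Longrightarrow> (\<And>x. x \<in> A \<Longrightarrow> bd3 (k x) (f x)) \<Longrightarrow> bd3 (sum k A) (prod f A)"
  by (induction A rule: finite_induct) (simp_all add: bd3_one bd3_mult)

lemma bd2_ex: "\<exists>K. bd2 K p"
proof -
  define K where "K = degree p + (\<Sum>i\<le>degree p. degree (coeff p i))"
  have "degree (coeff p i) \<le> K" for i
  proof (cases "i \<le> degree p")
    case True
    then have "degree (coeff p i) \<le> (\<Sum>i\<le>degree p. degree (coeff p i))"
      by (intro member_le_sum) auto
    then show ?thesis unfolding K_def by linarith
  next
    case False then show ?thesis by (simp add: coeff_eq_0)
  qed
  then have "bd2 K p" unfolding bd2_def K_def by auto
  then show ?thesis by blast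
qed

lemma bd3_ex: "\<exists>K. bd3 K p"
proof -
  define B where "B i = (SOME K. bd2 K (coeff p i))" for i
  have B: "bd2 (B i) (coeff p i)" for i unfolding B_def using bd2_ex by (rule someI_ex)
  define K where "K = degree p + (\<Sum>i\<le>degree p. B i)"
  have "bd2 K (coeff p i)" for i
  proof (cases "i \<le> degree p")
    case True
    then have "B i \<le> (\<Sum>i\<le>degree p. B i)"
      by (intro member_le_sum) auto
    then show ?thesis using B bd2_mono unfolding K_def by (metis trans_le_add2)
  next
    case False then show ?thesis by (simp add: coeff_eq_0 bd2_def)
  qed
  then have "bd3 K p" unfolding bd3_def K_def by auto
  then show ?thesis by blast
qed

definition coeff3 :: "'a::zero poly poly poly \<Rightarrow> nat \<Rightarrow> nat \<Rightarrow> nat \<Rightarrow> 'a" where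
  "coeff3 p i j k = coeff (coeff (coeff p i) j) k"

lemma bd3_zero: "bd3 K p \<Longrightarrow> (\<And>i j k. i \<le> K \<Longrightarrow> j \<le> K \<Longrightarrow> k \<le> K \<Longrightarrow> coeff3 p i j k = 0) \<Longrightarrow> p = 0"
proof -
  assume b: "bd3 K p" and z: "\<And>i j k. i \<le> K \<Longrightarrow> j \<le> K \<Longrightarrow> k \<le> K \<Longrightarrow> coeff3 p i j k = 0"
  show "p = 0"
  proof (rule poly_eqI, rule poly_eqI, rule poly_eqI)
    fix i j k
    show "coeff (coeff (coeff p i) j) k = coeff (coeff (coeff 0 i) j) k"
    proof (cases "i \<le> K \<and> j \<le> K \<and> k \<le> K")
      case True then show ?thesis using z[of i j k] by (simp add: coeff3_def)
    next
      case False
      then consider "i > K" | "j > K" | "k > K" by linarith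
      then show ?thesis
      proof cases
        case 1 then show ?thesis using b unfolding bd3_def by (simp add: coeff_eq_0)
      next
        case 2 then show ?thesis using b unfolding bd3_def bd2_def
          by (metis coeff_0 coeff_eq_0 le_less_trans)
      next
        case 3 then show ?thesis using b unfolding bd3_def bd2_def
          by (metis coeff_0 coeff_eq_0 le_less_trans)
      qed
    qed
  qed
qed

lemma coeff3_sum: "coeff3 (sum f A) i j k = (\<Sum>x\<in>A. coeff3 (f x) i j k)"
  unfolding coeff3_def by (simp add: coeff_sum)

lemma coeff3_C: "coeff3 ([:[:[:c:]:]:] * p) i j k = c * coeff3 p i j k"
  unfolding coeff3_def by simp


lemma lin_dep:
  fixes v :: "'e \<Rightarrow> 'i \<Rightarrow> 'a::field"
  assumes "finite I" "finite E" "card I < card E"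
  shows "\<exists>c. (\<exists>e\<in>E. c e \<noteq> 0) \<and> (\<forall>i\<in>I. (\<Sum>e\<in>E. c e * v e i) = 0)"
  using assms
proof (induction I arbitrary: E v rule: finite_induct)
  case empty
  then obtain e where "e \<in> E" by (metis card.empty card_ge_0_finite ex_in_conv less_irrefl_nat card_eq_0_iff)
  then show ?case by (intro exI[of _ "\<lambda>_. 1"]) auto
next
  case (insert i0 I)
  show ?case
  proof (cases "\<forall>e\<in>E. v e i0 = 0")
    case True
    have "card I < card E" using insert by simp
    then obtain c where c: "\<exists>e\<in>E. c e \<noteq> 0" "\<forall>i\<in>I. (\<Sum>e\<in>E. c e * v e i) = 0"
      using insert.IH[OF insert.prems(1)] by blast
    then show ?thesis using True by (intro exI[of _ c]) auto
  next
    case False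
    then obtain e0 where e0: "e0 \<in> E" "v e0 i0 \<noteq> 0" by blast
    define E' where "E' = E - {e0}"
    define w where "w e i = v e i - (v e i0 / v e0 i0) * v e0 i" for e i
    have fE': "finite E'" using insert by (simp add: E'_def)
    have "card E' = card E - 1" using e0 insert by (simp add: E'_def)
    then have "card I < card E'" using insert by simp
    then obtain c' where c': "\<exists>e\<in>E'. c' e \<noteq> 0" "\<forall>i\<in>I. (\<Sum>e\<in>E'. c' e * w e i) = 0"
      using insert.IH[OF fE'] by blast
    define a where "a = - (\<Sum>e\<in>E'. c' e * v e i0) / v e0 i0"
    define c where "c e = (if e = e0 then a else c' e)" for e
    have split: "(\<Sum>e\<in>E. c e * v e i) = a * v e0 i + (\<Sum>e\<in>E'. c' e * v e i)" for i
    proof -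
      have "(\<Sum>e\<in>E. c e * v e i) = c e0 * v e0 i + (\<Sum>e\<in>E'. c e * v e i)"
        unfolding E'_def using e0 insert by (simp add: sum.remove)
      also have "(\<Sum>e\<in>E'. c e * v e i) = (\<Sum>e\<in>E'. c' e * v e i)"
        by (rule sum.cong) (auto simp: c_def E'_def)
      finally show ?thesis by (simp add: c_def)
    qed
    have wsum: "(\<Sum>e\<in>E'. c' e * w e i) = (\<Sum>e\<in>E'. c' e * v e i) + a * v e0 i" for i
    proof -
      have "(\<Sum>e\<in>E'. c' e * w e i) = (\<Sum>e\<in>E'. c' e * v e i - (c' e * v e i0) * (v e0 i / v e0 i0))"
        unfolding w_def by (rule sum.cong) (auto simp: algebra_simps)
      also have "\<dots> = (\<Sum>e\<in>E'. c' e * v e i) - (\<Sum>e\<in>E'. c' e * v e i0) * (v e0 i / v e0 i0)"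
        by (simp add: sum_subtractf sum_distrib_right sum_divide_distrib)
      finally show ?thesis unfolding a_def by (simp add: field_simps)
    qed
    show ?thesis
    proof (intro exI[of _ c] conjI ballI)
      show "\<exists>e\<in>E. c e \<noteq> 0" using c' by (auto simp: c_def E'_def)
      fix i assume "i \<in> insert i0 I"
      then consider "i = i0" | "i \<in> I" by blast
      then show "(\<Sum>e\<in>E. c e * v e i) = 0"
      proof cases
        case 1 then show ?thesis unfolding split using e0 by (simp add: a_def)
      next
        case 2 then show ?thesis unfolding split using c'(2) wsum by (simp add: add.commute)
      qed
    qed
  qed
qed


lemma Fract_power: "Fract a b ^ n = Fract (a ^ n) (b ^ n)"
  by (induction n) (simp_all add: One_fract_def)

lemma Fract_prod: "finite A \<Longrightarrow> (\<Prod>x\<in>A. Fract (a x) (b x)) = Fract (\<Prod>x\<in>A. a x) (\<Prod>x\<in>A. b x)"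
  by (induction A rule: finite_induct) (simp_all add: One_fract_def)

lemma Fract_sum_same:
  assumes "D \<noteq> 0" shows "finite A \<Longrightarrow> (\<Sum>x\<in>A. Fract (f x) D) = Fract (\<Sum>x\<in>A. f x) D"
proof (induction A rule: finite_induct)
  case empty then show ?case by (simp add: Zero_fract_def eq_fract(3))
next
  case (insert x A)
  have "Fract (f x) D + Fract (sum f A) D = Fract (D * (f x + sum f A)) (D * D)"
    using assms by (simp add: algebra_simps)
  also have "\<dots> = Fract (f x + sum f A) D" using assms by (rule mult_fract_cancel)
  finally show ?case using insert by simp
qed

lemma Fract_pad:
  assumes "b \<noteq> 0" "e \<le> N"
  shows "Fract (a ^ e) (b ^ e) = Fract (a ^ e * b ^ (N - e)) (b ^ N)"
proof -
  have "a ^ e * b ^ N = a ^ e * b ^ (N - e) * b ^ e" using assms(2)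
    by (simp add: mult.assoc power_add[symmetric])
  then show ?thesis using assms by (simp add: eq_fract)
qed

lemma count_ineq:
  fixes n d :: nat
  assumes "n \<ge> 4"
  defines "N \<equiv> (n*d+1)^3"
  shows "(n*(N*d) + 1)^3 < (N+1)^n"
proof -
  have N1: "N \<ge> 1" unfolding N_def by simp
  have "n*(N*d) + 1 \<le> N * (n*d+1)" using N1 by (simp add: algebra_simps)
  then have "(n*(N*d) + 1)^3 \<le> (N * (n*d+1))^3" by (rule power_mono) simp
  also have "\<dots> = N^3 * (n*d+1)^3" by (rule power_mult_distrib)
  also have "\<dots> = N^3 * N" by (simp add: N_def)
  also have "\<dots> = N^4" by (simp add: power_Suc2[symmetric] numeral_eq_Suc)
  also have "\<dots> < (N+1)^4" by (rule power_strict_mono) auto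
  also have "\<dots> \<le> (N+1)^n" by (rule power_increasing) (use assms in auto)
  finally show ?thesis .
qed

lemma upper:
  assumes ai: "alg_indep as"
  shows "length as \<le> 3"
proof (rule ccontr)
  assume "\<not> length as \<le> 3"
  define n where "n = length as"
  have n4: "n \<ge> 4" using \<open>\<not> length as \<le> 3\<close> n_def by simp
  have "\<forall>i. \<exists>ab. as ! i = Fract (fst ab) (snd ab) \<and> snd ab \<noteq> 0"
    by (metis Fract_cases fst_conv snd_conv)
  then obtain f where f: "\<And>i. as ! i = Fract (fst (f i)) (snd (f i)) \<and> snd (f i) \<noteq> 0"
    by metis
  define g where "g i = fst (f i)" for i
  define Dn where "Dn i = snd (f i)" for i
  have gD: "as ! i = Fract (g i) (Dn i)" "Dn i \<noteq> 0" for i using f unfolding g_def Dn_def by auto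
  define K1 where "K1 i = (SOME K. bd3 K (g i))" for i
  define K2 where "K2 i = (SOME K. bd3 K (Dn i))" for i
  have K1: "bd3 (K1 i) (g i)" for i unfolding K1_def using bd3_ex by (rule someI_ex)
  have K2: "bd3 (K2 i) (Dn i)" for i unfolding K2_def using bd3_ex by (rule someI_ex)
  define d where "d = (\<Sum>i<n. K1 i + K2 i)"
  have dle: "K1 i \<le> d" "K2 i \<le> d" if "i < n" for i
  proof -
    have "K1 i + K2 i \<le> d" unfolding d_def using that by (intro member_le_sum) auto
    then show "K1 i \<le> d" "K2 i \<le> d" by auto
  qed
  have bg: "bd3 d (g i)" and bD: "bd3 d (Dn i)" if "i < n" for i
    using K1 K2 dle[OF that] bd3_mono by blast+
  define N where "N = (n*d+1)^3"
  define K where "K = n*(N*d)"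
  define E where "E = {e. set e \<subseteq> {0..N} \<and> length e = n}"
  define I where "I = {0..K} \<times> {0..K} \<times> {0..K}"
  define Num where "Num e = (\<Prod>i<n. g i ^ (e!i) * Dn i ^ (N - e!i))" for e
  define Den where "Den = (\<Prod>i<n. Dn i ^ N)"
  have Den0: "Den \<noteq> 0" unfolding Den_def using gD(2) by simp
  have fE: "finite E" unfolding E_def by (rule finite_lists_length_eq) simp
  have cE: "card E = (N+1)^n" unfolding E_def by (subst card_lists_length_eq) simp_all
  have fI: "finite I" unfolding I_def by simp
  have cI: "card I = (K+1)^3" unfolding I_def by (simp add: card_cartesian_product power3_eq_cube)
  have eN: "e ! i \<le> N" if "e \<in> E" "i < n" for e i
    using that unfolding E_def by (auto simp: set_conv_nth)
  have bNum: "bd3 K (Num e)" if "e \<in> E" for e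
  proof -
    have "bd3 (\<Sum>i<n. N*d) (Num e)" unfolding Num_def
    proof (rule bd3_prod, simp)
      fix i assume "i \<in> {..<n}"
      then have i: "i < n" by simp
      have "bd3 (e!i * d + (N - e!i) * d) (g i ^ (e!i) * Dn i ^ (N - e!i))"
        by (intro bd3_mult bd3_power bg bD i)
      moreover have "e!i * d + (N - e!i) * d = N*d" using eN[OF that i]
        by (simp add: add_mult_distrib[symmetric])
      ultimately show "bd3 (N*d) (g i ^ (e!i) * Dn i ^ (N - e!i))" by simp
    qed
    then show ?thesis unfolding K_def by simp
  qed
  have mono: "(\<Prod>i<n. (as ! i) ^ (e ! i)) = Fract (Num e) Den" if "e \<in> E" for e
  proof -
    have "(\<Prod>i<n. (as ! i) ^ (e ! i)) = (\<Prod>i<n. Fract (g i ^ (e!i) * Dn i ^ (N - e!i)) (Dn i ^ N))"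
      by (rule prod.cong) (simp_all add: gD Fract_power Fract_pad eN[OF that])
    then show ?thesis unfolding Num_def Den_def by (simp add: Fract_prod)
  qed
  have "card I < card E" unfolding cI cE K_def N_def using count_ineq[OF n4] by simp
  from lin_dep[OF fI fE this, of "\<lambda>e (i,j,k). coeff3 (Num e) i j k"]
  obtain c where c: "\<exists>e\<in>E. c e \<noteq> 0"
      "\<forall>x\<in>I. (\<Sum>e\<in>E. c e * (\<lambda>e (i,j,k). coeff3 (Num e) i j k) e x) = 0"
    by (elim exE conjE) (rule that, assumption+)
  define T where "T = (\<Sum>e\<in>E. [:[:[:c e:]:]:] * Num e)"
  have "T = 0"
  proof (rule bd3_zero)
    show "bd3 K T" unfolding T_def
      by (rule bd3_sum[OF fE]) (use bd3_mult[OF bd3_const bNum] in simp)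
    fix i j k assume "i \<le> K" "j \<le> K" "k \<le> K"
    then have "(i,j,k) \<in> I" unfolding I_def by simp
    then show "coeff3 T i j k = 0" using c(2) unfolding T_def coeff3_sum coeff3_C by auto
  qed
  have "(\<Sum>e\<in>E. ratK (c e) * (\<Prod>i<length as. (as ! i) ^ (e ! i))) = (\<Sum>e\<in>E. Fract ([:[:[:c e:]:]:] * Num e) Den)"
    by (rule sum.cong) (simp_all add: n_def[symmetric] mono ratK_def)
  also have "\<dots> = Fract T Den" unfolding T_def by (rule Fract_sum_same[OF Den0 fE])
  also have "\<dots> = 0" using \<open>T = 0\<close> by (simp add: Zero_fract_def eq_fract(3))
  finally have "(\<Sum>e\<in>E. ratK (c e) * (\<Prod>i<length as. (as ! i) ^ (e ! i))) = 0" .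
  moreover have "\<forall>e\<in>E. length e = length as" unfolding E_def n_def by simp
  ultimately have "\<forall>e\<in>E. c e = 0" using ai fE unfolding alg_indep_def by blast
  then show False using c(1) by blast
qed


definition M3 :: "nat \<Rightarrow> nat \<Rightarrow> nat \<Rightarrow> rat poly poly poly" where
  "M3 a b c = monom (monom (monom 1 a) b) c"

lemma M3_mult: "M3 a b c * M3 a' b' c' = M3 (a+a') (b+b') (c+c')"
  unfolding M3_def by (simp add: mult_monom)

lemma M3_power: "M3 a b c ^ n = M3 (n*a) (n*b) (n*c)"
  by (induction n) (simp_all add: M3_mult, simp add: M3_def monom_0 one_pCons)

lemma var_M3: "var_u = Fract (M3 1 0 0) 1" "var_v = Fract (M3 0 1 0) 1" "var_w = Fract (M3 0 0 1) 1"
  unfolding var_u_def var_v_def var_w_def M3_def by (simp_all add: monom_0 monom_Suc one_pCons[symmetric])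

lemma coeff3_M3: "coeff3 ([:[:[:r:]:]:] * M3 a b c) k j i = (if a = i \<and> b = j \<and> c = k then r else 0)"
  unfolding coeff3_C by (simp add: coeff3_def M3_def)

lemma indep_uvw: "alg_indep [var_u, var_v, var_w]"
  unfolding alg_indep_def
proof (intro allI impI ballI)
  fix c :: "nat list \<Rightarrow> rat" and E :: "nat list set" and e
  assume h: "finite E \<and> (\<forall>e\<in>E. length e = length [var_u, var_v, var_w]) \<and>
        (\<Sum>e\<in>E. ratK (c e) * (\<Prod>i<length [var_u, var_v, var_w]. ([var_u, var_v, var_w] ! i) ^ (e ! i))) = 0"
    and eE: "e \<in> E"
  have fE: "finite E" and len: "\<And>e. e \<in> E \<Longrightarrow> length e = 3" using h by auto
  have trm: "ratK (c e) * (\<Prod>i<length [var_u, var_v, var_w]. ([var_u, var_v, var_w] ! i) ^ (e ! i))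
      = Fract ([:[:[:c e:]:]:] * M3 (e!0) (e!1) (e!2)) 1" for e
    by (simp add: ratK_def var_M3 Fract_power M3_power M3_mult numeral_3_eq_3 numeral_2_eq_2 lessThan_Suc)
  define T where "T = (\<Sum>e\<in>E. [:[:[:c e:]:]:] * M3 (e!0) (e!1) (e!2))"
  have "Fract T 1 = 0" using h unfolding T_def trm
    by (simp add: Fract_sum_same[OF _ fE])
  then have T0: "T = 0" by (simp add: Zero_fract_def eq_fract)
  have "coeff3 T (e!2) (e!1) (e!0) = (\<Sum>e'\<in>E. if e' = e then c e' else 0)"
    unfolding T_def coeff3_sum coeff3_M3
  proof (rule sum.cong)
    fix e' assume "e' \<in> E"
    have "(e'!0 = e!0 \<and> e'!1 = e!1 \<and> e'!2 = e!2) \<longleftrightarrow> e' = e"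
      using len[OF \<open>e' \<in> E\<close>] len[OF eE]
      by (auto simp: numeral_3_eq_3 length_Suc_conv)
    then show "(if e' ! 0 = e ! 0 \<and> e' ! 1 = e ! 1 \<and> e' ! 2 = e ! 2 then c e' else 0) = (if e' = e then c e' else 0)"
      by simp
  qed simp
  also have "\<dots> = c e" using fE eE by simp
  finally show "c e = 0" using T0 by (simp add: coeff3_def)
qed

theorem theorem2:
  shows "\<exists>x y z p q r :: ratfun3.
           tri x + tri y = tri p \<and> tri y + tri z = tri q \<and> tri z + tri x = tri r \<and>
           trdeg_eq (gen_subfield {x, y, z, p, q, r}) 3"
proof (intro exI conjI)
  show "tri ((wX - 1)/2) + tri ((wY - 1)/2) = tri ((wP - 1)/2)"
       "tri ((wY - 1)/2) + tri ((wZ - 1)/2) = tri ((wQ - 1)/2)"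
       "tri ((wZ - 1)/2) + tri ((wX - 1)/2) = tri ((wR - 1)/2)" by (rule sys)+
  show "trdeg_eq (gen_subfield {(wX - 1)/2, (wY - 1)/2, (wZ - 1)/2, (wP - 1)/2, (wQ - 1)/2, (wR - 1)/2}) 3"
    unfolding trdeg_eq_def
  proof (intro conjI allI impI)
    show "\<exists>as. length as = 3 \<and> set as \<subseteq> gen_subfield {(wX - 1)/2, (wY - 1)/2, (wZ - 1)/2, (wP - 1)/2, (wQ - 1)/2, (wR - 1)/2} \<and> alg_indep as"
      using in_gen indep_uvw by (intro exI[of _ "[var_u, var_v, var_w]"]) auto
  next
    fix as :: "ratfun3 list"
    assume "set as \<subseteq> gen_subfield {(wX - 1)/2, (wY - 1)/2, (wZ - 1)/2, (wP - 1)/2, (wQ - 1)/2, (wR - 1)/2} \<and> alg_indep as"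
    then show "length as \<le> 3" using upper by blast
  qed
qed


end
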